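(* Fix a finite complete graph $K$, a vertex $x\in V(K)$, an edge probability measure $\mu$ on $E(K)$, and an integer $m\ge 2$. Then \[ \sum_{\substack{P\in\mathrm{cp}(K,P_{m+1}),\\ \deg_P(x)=1}}\mu(P)\le\bar\mu(x)\Bigl(\frac{1-\bar\mu(x)}{m-1}\Bigr)^{m-1}. \]
   Context: $P_{m+1}$ is the path on $m+1$ vertices; $\mathrm{cp}(K,P_{m+1})$ is the set of subgraphs of $K$ isomorphic to $P_{m+1}$. An edge probability measure on $K$ is a probability measure $\mu$ on $E(K)$; for a subgraph $H\subseteq K$, $\mu(H)=\prod_{e\in E(H)}\mu(e)$; and $\bar\mu(x)=\sum_{y\in V(K)\setminus\{x\}}\mu(xy)$. *)

theory Defs
  imports Complex_Main
begin

definition K_edges :: "'a set \<Rightarrow> 'a set set" where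
  "K_edges V = {e. e \<subseteq> V \<and> card e = 2}"

definition edge_prob_measure :: "'a set \<Rightarrow> ('a set \<Rightarrow> real) \<Rightarrow> bool" where
  "edge_prob_measure V \<mu> \<longleftrightarrow> (\<forall>e \<in> K_edges V. 0 \<le> \<mu> e) \<and> (\<Sum>e \<in> K_edges V. \<mu> e) = 1"

text \<open>Copies of the path on m+1 vertices in K, each represented by its edge set
  (a path with at least one edge is determined by its edge set).\<close>
definition path_copies :: "'a set \<Rightarrow> nat \<Rightarrow> 'a set set set" where
  "path_copies V m = {{{vs ! i, vs ! Suc i} | i. i < m} | vs.
      length vs = m + 1 \<and> distinct vs \<and> set vs \<subseteq> V}"

definition deg_in :: "'a set set \<Rightarrow> 'a \<Rightarrow> nat" where
  "deg_in P x = card {e \<in> P. x \<in> e}"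

definition mu_sub :: "('a set \<Rightarrow> real) \<Rightarrow> 'a set set \<Rightarrow> real" where
  "mu_sub \<mu> H = (\<Prod>e \<in> H. \<mu> e)"

definition mu_bar :: "'a set \<Rightarrow> ('a set \<Rightarrow> real) \<Rightarrow> 'a \<Rightarrow> real" where
  "mu_bar V \<mu> x = (\<Sum>y \<in> V - {x}. \<mu> {x, y})"

end

theory Submission
  imports Defs
begin


lemma amgm:
  fixes s t :: real and k :: nat
  assumes s: "0 \<le> s" and t: "0 \<le> t"
  shows "s * t ^ k \<le> ((s + real k * t) / real (Suc k)) ^ Suc k"
proof (cases "t = 0")
  case True
  then show ?thesis using s by (cases k) auto
next
  case False
  then have tp: "t > 0" using t by simp
  define x where "x = (s - t) / (real (Suc k) * t)"
  have dp: "real (Suc k) * t > 0" using tp by simp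
  have "-(real (Suc k) * t) \<le> s - t" using s tp
    by (simp add: algebra_simps) (smt (verit) mult_nonneg_nonneg of_nat_0_le_iff)
  then have x1: "-1 \<le> x" unfolding x_def using dp
    by (simp add: pos_le_divide_eq)
  have "1 + real (Suc k) * x \<le> (1 + x) ^ Suc k"
    by (rule Bernoulli_inequality[OF x1])
  moreover have "real (Suc k) * x = (s - t) / t" unfolding x_def using tp
    by (simp del: of_nat_Suc)
  then have "1 + real (Suc k) * x = s / t" using tp
    by (simp add: diff_divide_distrib)
  moreover have "1 + x = ((s + real k * t) / real (Suc k)) / t" unfolding x_def
  proof -
    have "t + t * real k > 0" using tp by (simp add: add_pos_nonneg)
    then show "1 + (s - t) / (real (Suc k) * t) = (s + real k * t) / real (Suc k) / t"
      using tp by (simp add: field_simps)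
  qed
  ultimately have "s / t \<le> (((s + real k * t) / real (Suc k)) / t) ^ Suc k" by simp
  also have "\<dots> = ((s + real k * t) / real (Suc k)) ^ Suc k / t ^ Suc k"
    by (simp add: power_divide power_mult_distrib)
  finally have h: "s / t \<le> ((s + real k * t) / real (Suc k)) ^ Suc k / t ^ Suc k" .
  have "s / t * t ^ Suc k \<le> ((s + real k * t) / real (Suc k)) ^ Suc k"
    using h pos_le_divide_eq[of "t ^ Suc k"] tp zero_less_power by blast
  moreover have "s / t * t ^ Suc k = s * t ^ k" using tp by simp
  ultimately show ?thesis by simp
qed



fun wt :: "('a set \<Rightarrow> real) \<Rightarrow> 'a list \<Rightarrow> real" where
  "wt \<mu> (a # b # r) = \<mu> {a, b} * wt \<mu> (b # r)"
| "wt \<mu> _ = 1"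

definition seqs :: "nat \<Rightarrow> 'a set \<Rightarrow> 'a \<Rightarrow> 'a list set" where
  "seqs k U v = {vs. length vs = Suc k \<and> distinct vs \<and> set vs \<subseteq> U \<and> hd vs = v}"

definition ledges :: "'a list \<Rightarrow> 'a set set" where
  "ledges vs = {{vs ! i, vs ! Suc i} | i. i < length vs - 1}"

definition tot :: "'a set \<Rightarrow> ('a set \<Rightarrow> real) \<Rightarrow> real" where
  "tot U \<mu> = (\<Sum>e \<in> K_edges U. \<mu> e)"

lemma ledges_Cons2: "ledges (a # b # r) = insert {a, b} (ledges (b # r))"
proof
  show "ledges (a # b # r) \<subseteq> insert {a, b} (ledges (b # r))"
  proof
    fix e assume "e \<in> ledges (a # b # r)"
    then obtain i where i: "i < Suc (length r)" "e = {(a#b#r) ! i, (a#b#r) ! Suc i}"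
      unfolding ledges_def by auto
    show "e \<in> insert {a, b} (ledges (b # r))"
    proof (cases i)
      case 0 then show ?thesis using i by simp
    next
      case (Suc j) then show ?thesis using i unfolding ledges_def by auto
    qed
  qed
next
  show "insert {a, b} (ledges (b # r)) \<subseteq> ledges (a # b # r)"
  proof
    fix e assume "e \<in> insert {a, b} (ledges (b # r))"
    then consider "e = {a, b}" | "e \<in> ledges (b # r)" by blast
    then show "e \<in> ledges (a # b # r)"
    proof cases
      case 1
      then show ?thesis unfolding ledges_def
        by (auto intro!: exI[of _ 0])
    next
      case 2
      then obtain j where j: "j < length r" "e = {(b#r) ! j, (b#r) ! Suc j}"
        unfolding ledges_def by auto
      then show ?thesis unfolding ledges_def
        by (auto intro!: exI[of _ "Suc j"])
    qed
  qed
qed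

lemma ledges_short: "length vs \<le> 1 \<Longrightarrow> ledges vs = {}"
  unfolding ledges_def by auto

lemma ledges_sub: "e \<in> ledges vs \<Longrightarrow> e \<subseteq> set vs"
  unfolding ledges_def by auto

lemma finite_ledges: "finite (ledges vs)"
proof -
  have "ledges vs = (\<lambda>i. {vs ! i, vs ! Suc i}) ` {..<length vs - 1}"
    unfolding ledges_def by auto
  then show ?thesis by simp
qed

lemma mu_sub_ledges: "distinct vs \<Longrightarrow> mu_sub \<mu> (ledges vs) = wt \<mu> vs"
proof (induction \<mu> vs rule: wt.induct)
  case (1 \<mu> a b r)
  have "{a, b} \<notin> ledges (b # r)" using 1(2) ledges_sub by fastforce
  then show ?case using 1 by (simp add: ledges_Cons2 mu_sub_def finite_ledges)
next
  case ("2_1" \<mu>) then show ?case by (simp add: ledges_short mu_sub_def)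
next
  case ("2_2" \<mu> v) then show ?case by (simp add: ledges_short mu_sub_def)
qed

lemma ledges_rev: "ledges (rev vs) = ledges vs"
proof -
  have *: "ledges (rev vs) \<subseteq> ledges vs" for vs :: "'a list"
  proof
    fix e assume "e \<in> ledges (rev vs)"
    then obtain i where i: "i < length vs - 1" "e = {rev vs ! i, rev vs ! Suc i}"
      unfolding ledges_def by auto
    define j where "j = length vs - 2 - i"
    have "j < length vs - 1" "Suc j = length vs - 1 - i" using i(1) unfolding j_def by auto
    moreover have "rev vs ! i = vs ! (length vs - 1 - i)" "rev vs ! Suc i = vs ! j"
      using i(1) by (auto simp: rev_nth j_def)
    ultimately show "e \<in> ledges vs" using i(2) unfolding ledges_def
      by (auto intro!: exI[of _ j])
  qed
  show ?thesis using *[of vs] *[of "rev vs"] by simp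
qed

lemma K_edge_pair: "a \<in> U \<Longrightarrow> b \<in> U \<Longrightarrow> a \<noteq> b \<Longrightarrow> {a, b} \<in> K_edges U"
  unfolding K_edges_def by auto

lemma wt_nonneg:
  assumes "\<forall>e \<in> K_edges U. 0 \<le> \<mu> e" "distinct vs" "set vs \<subseteq> U"
  shows "0 \<le> wt \<mu> vs"
  using assms
proof (induction \<mu> vs rule: wt.induct)
  case (1 \<mu>' a b r)
  have "{a, b} \<in> K_edges U" using 1(3,4) by (intro K_edge_pair) auto
  then have "0 \<le> \<mu>' {a, b}" using 1(2) by blast
  moreover have "0 \<le> wt \<mu>' (b # r)" using 1 by simp
  ultimately show ?case by simp
next
  case ("2_1" \<mu>') then show ?case by simp
next
  case ("2_2" \<mu>' v) then show ?case by simp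
qed

lemma finite_seqs: "finite U \<Longrightarrow> finite (seqs k U v)"
  by (rule finite_subset[OF _ finite_lists_length_eq[of U "Suc k"]]) (auto simp: seqs_def)

lemma seqs_step:
  assumes fin: "finite U" and nn: "\<forall>e \<in> K_edges U. 0 \<le> \<mu> e" and vU: "v \<in> U"
  shows "sum (wt \<mu>) (seqs (Suc k) U v)
     \<le> (\<Sum>u \<in> U - {v}. \<mu> {v, u} * sum (wt \<mu>) (seqs k (U - {v}) u))"
proof -
  let ?S = "SIGMA u:U - {v}. seqs k (U - {v}) u"
  have finS: "finite ?S" using fin by (auto intro!: finite_SigmaI finite_seqs)
  have sub: "seqs (Suc k) U v \<subseteq> (\<lambda>(u, ws). v # ws) ` ?S"
  proof
    fix vs assume vs: "vs \<in> seqs (Suc k) U v"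
    then obtain ws where ws: "vs = v # ws" "length ws = Suc k"
      unfolding seqs_def by (cases vs) auto
    then obtain u r where ur: "ws = u # r" by (cases ws) auto
    have "v \<in> U" "v \<notin> set ws" "set ws \<subseteq> U" "distinct ws" using vs ws unfolding seqs_def by auto
    then have "u \<in> U - {v}" using ur by auto
    moreover have "ws \<in> seqs k (U - {v}) u" unfolding seqs_def
      using ws(2) ur \<open>v \<notin> set ws\<close> \<open>set ws \<subseteq> U\<close> \<open>distinct ws\<close> by auto
    ultimately have "(u, ws) \<in> ?S" by blast
    then show "vs \<in> (\<lambda>(u, ws). v # ws) ` ?S" using ws by force
  qed
  have nnS: "0 \<le> wt \<mu> (v # ws)" if "(u, ws) \<in> ?S" for u ws
    using that vU by (intro wt_nonneg[OF nn]) (auto simp: seqs_def)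
  have "sum (wt \<mu>) (seqs (Suc k) U v) \<le> sum (wt \<mu>) ((\<lambda>(u, ws). v # ws) ` ?S)"
    by (rule sum_mono2) (use finS sub nnS in auto)
  also have "\<dots> \<le> sum (wt \<mu> \<circ> (\<lambda>(u, ws). v # ws)) ?S"
    by (rule sum_image_le[OF finS]) (use nnS in auto)
  also have "\<dots> = (\<Sum>u \<in> U - {v}. \<Sum>ws \<in> seqs k (U - {v}) u. wt \<mu> (v # ws))"
  proof -
    have "sum (wt \<mu> \<circ> (\<lambda>(u, ws). v # ws)) ?S = sum (\<lambda>(u, ws). wt \<mu> (v # ws)) ?S"
      by (rule sum.cong) auto
    also have "\<dots> = (\<Sum>u \<in> U - {v}. \<Sum>ws \<in> seqs k (U - {v}) u. wt \<mu> (v # ws))"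
      by (rule sum.Sigma[symmetric]) (use fin finite_seqs[of "U - {v}"] in auto)
    finally show ?thesis .
  qed
  also have "\<dots> = (\<Sum>u \<in> U - {v}. \<mu> {v, u} * sum (wt \<mu>) (seqs k (U - {v}) u))"
  proof (rule sum.cong[OF refl])
    fix u assume "u \<in> U - {v}"
    have "wt \<mu> (v # ws) = \<mu> {v, u} * wt \<mu> ws" if "ws \<in> seqs k (U - {v}) u" for ws
      using that unfolding seqs_def by (cases ws) auto
    then show "(\<Sum>ws \<in> seqs k (U - {v}) u. wt \<mu> (v # ws)) = \<mu> {v, u} * sum (wt \<mu>) (seqs k (U - {v}) u)"
      by (simp add: sum_distrib_left)
  qed
  finally show ?thesis .
qed

lemma tot_split:
  assumes fin: "finite U" and v: "v \<in> U"
  shows "tot U \<mu> = tot (U - {v}) \<mu> + (\<Sum>u \<in> U - {v}. \<mu> {v, u})"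
proof -
  have eq: "K_edges U = K_edges (U - {v}) \<union> (\<lambda>u. {v, u}) ` (U - {v})"
  proof
    show "K_edges U \<subseteq> K_edges (U - {v}) \<union> (\<lambda>u. {v, u}) ` (U - {v})"
    proof
      fix e assume "e \<in> K_edges U"
      then obtain a b where e: "e = {a, b}" "a \<noteq> b" "a \<in> U" "b \<in> U"
        unfolding K_edges_def by (auto simp: card_2_iff)
      show "e \<in> K_edges (U - {v}) \<union> (\<lambda>u. {v, u}) ` (U - {v})"
      proof (cases "v \<in> e")
        case True
        then have "e = {v, a} \<and> a \<noteq> v \<or> e = {v, b} \<and> b \<noteq> v" using e by auto
        then show ?thesis using e by blast
      next
        case False
        then show ?thesis using e K_edge_pair[of a "U - {v}" b] by auto
      qed
    qed
  next
    show "K_edges (U - {v}) \<union> (\<lambda>u. {v, u}) ` (U - {v}) \<subseteq> K_edges U"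
      using v by (auto simp: K_edges_def)
  qed
  have fin1: "finite (K_edges (U - {v}))"
    by (rule finite_subset[of _ "Pow U"]) (use fin in \<open>auto simp: K_edges_def\<close>)
  have disj: "K_edges (U - {v}) \<inter> (\<lambda>u. {v, u}) ` (U - {v}) = {}"
    by (auto simp: K_edges_def)
  have inj: "inj_on (\<lambda>u. {v, u}) (U - {v})"
    by (auto simp: inj_on_def doubleton_eq_iff)
  show ?thesis unfolding tot_def eq
    by (subst sum.union_disjoint) (use fin fin1 disj inj in \<open>auto simp: sum.reindex\<close>)
qed

lemma seqs_bound:
  assumes "finite U" "v \<in> U" "\<forall>e\<in>K_edges U. 0 \<le> \<mu> e"
  shows "sum (wt \<mu>) (seqs k U v) \<le> (tot U \<mu> / real k) ^ k"
  using assms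
proof (induction k arbitrary: U v)
  case 0
  have "seqs 0 U v = {[v]}" using 0 by (auto simp: seqs_def length_Suc_conv)
  then show ?case by simp
next
  case (Suc k)
  let ?S = "\<Sum>u\<in>U-{v}. \<mu> {v,u}"
  let ?T = "tot (U-{v}) \<mu>"
  have nn': "\<forall>e\<in>K_edges (U-{v}). 0 \<le> \<mu> e" using Suc.prems(3) by (auto simp: K_edges_def)
  have muv: "0 \<le> \<mu> {v,u}" if "u \<in> U-{v}" for u
    using that Suc.prems K_edge_pair[of v U u] by auto
  have "sum (wt \<mu>) (seqs (Suc k) U v) \<le> (\<Sum>u\<in>U-{v}. \<mu> {v,u} * sum (wt \<mu>) (seqs k (U-{v}) u))"
    by (rule seqs_step) (use Suc.prems in auto)
  also have "\<dots> \<le> (\<Sum>u\<in>U-{v}. \<mu> {v,u} * (?T / real k) ^ k)"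
  proof (rule sum_mono, rule mult_left_mono)
    fix u assume u: "u \<in> U-{v}"
    show "sum (wt \<mu>) (seqs k (U-{v}) u) \<le> (?T / real k) ^ k"
      using Suc.IH[of "U-{v}" u] Suc.prems(1) nn' u by auto
    show "0 \<le> \<mu> {v,u}" using muv u by auto
  qed
  also have "\<dots> = ?S * (?T / real k) ^ k" by (simp add: sum_distrib_right)
  also have "\<dots> \<le> (tot U \<mu> / real (Suc k)) ^ Suc k"
  proof (cases "k = 0")
    case True
    have "0 \<le> ?T" unfolding tot_def using nn' by (auto intro: sum_nonneg)
    then show ?thesis using True tot_split[OF Suc.prems(1,2), of \<mu>] by simp
  next
    case False
    have S0: "0 \<le> ?S" using muv by (auto intro: sum_nonneg)
    have T0: "0 \<le> ?T / real k" unfolding tot_def using nn'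
      by (auto intro!: sum_nonneg divide_nonneg_nonneg)
    have "?S * (?T / real k) ^ k \<le> ((?S + real k * (?T / real k)) / real (Suc k)) ^ Suc k"
      by (rule amgm[OF S0 T0])
    also have "?S + real k * (?T / real k) = tot U \<mu>"
      using False tot_split[OF Suc.prems(1,2), of \<mu>] by simp
    finally show ?thesis .
  qed
  finally show ?case .
qed

lemma path_sub:
  assumes "P \<in> path_copies V m" "deg_in P x = 1"
  shows "P \<in> ledges ` seqs m V x"
proof -
  obtain vs where vs: "P = {{vs!i, vs!Suc i}|i. i<m}" "length vs = m+1" "distinct vs" "set vs \<subseteq> V"
    using assms(1) unfolding path_copies_def by blast
  have P: "P = ledges vs" using vs unfolding ledges_def by simp
  have fin: "finite P" using P finite_ledges by simp
  have "x = vs!0 \<or> x = vs!m"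
  proof (rule ccontr)
    assume nx: "\<not> (x = vs!0 \<or> x = vs!m)"
    show False
    proof (cases "x \<in> set vs")
      case False
      then have "{e\<in>P. x\<in>e} = {}" using P ledges_sub by blast
      then show False using assms(2) unfolding deg_in_def by (metis card.empty zero_neq_one)
    next
      case True
      then obtain j where j: "j < length vs" "vs!j = x" by (auto simp: in_set_conv_nth)
      have "j \<noteq> 0" using nx j(2) by metis
      have "j \<noteq> m" using nx j(2) by metis
      then have j0: "0 < j" "j < m" using \<open>j \<noteq> 0\<close> j(1) vs(2) by auto
      let ?e1 = "{vs!(j-1), vs!j}" and ?e2 = "{vs!j, vs!Suc j}"
      have "?e1 = {vs!(j-1), vs!Suc (j-1)}" using j0 by simp
      then have e1: "?e1 \<in> P" using j0 unfolding vs(1) by (auto intro!: exI[of _ "j-1"])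
      have e2: "?e2 \<in> P" using j0 unfolding vs(1) by auto
      have "vs!(j-1) \<noteq> vs!Suc j" "vs!(j-1) \<noteq> vs!j"
        using j0 vs(2,3) by (auto simp: nth_eq_iff_index_eq)
      then have "?e1 \<noteq> ?e2" by (auto simp: doubleton_eq_iff)
      then have "card {?e1, ?e2} = 2" by simp
      moreover have "{?e1, ?e2} \<subseteq> {e\<in>P. x\<in>e}" using e1 e2 j(2) by auto
      then have "card {?e1, ?e2} \<le> card {e\<in>P. x\<in>e}" by (rule card_mono[rotated]) (use fin in auto)
      ultimately show False using assms(2) unfolding deg_in_def by simp
    qed
  qed
  then show ?thesis
  proof
    assume "x = vs!0"
    then have "vs \<in> seqs m V x" using vs(2,3,4) by (cases vs) (auto simp: seqs_def)
    then show ?thesis using P by blast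
  next
    assume "x = vs!m"
    then have "last vs = x" using vs(2) by (cases vs rule: rev_cases) (auto simp: nth_append)
    then have "rev vs \<in> seqs m V x" using vs(2,3,4) by (cases vs rule: rev_cases) (auto simp: seqs_def)
    then show ?thesis using P ledges_rev by (metis image_eqI)
  qed
qed

theorem proposition4p4:
  fixes V :: "'a set" and x :: 'a and \<mu> :: "'a set \<Rightarrow> real" and m :: nat
  assumes "finite V" and "x \<in> V" and "edge_prob_measure V \<mu>" and "m \<ge> 2"
  shows "(\<Sum>P \<in> {P \<in> path_copies V m. deg_in P x = 1}. mu_sub \<mu> P)
           \<le> mu_bar V \<mu> x * ((1 - mu_bar V \<mu> x) / (real m - 1)) ^ (m - 1)"
proof -
  obtain k where m: "m = Suc k" and k: "k \<ge> 1" using assms(4) by (cases m) auto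
  have nn: "\<forall>e\<in>K_edges V. 0 \<le> \<mu> e" and tot1: "tot V \<mu> = 1"
    using assms(3) unfolding edge_prob_measure_def tot_def by auto
  let ?A = "{P \<in> path_copies V m. deg_in P x = 1}"
  have finseq: "finite (seqs m V x)" using assms(1) by (rule finite_seqs)
  have wnn: "0 \<le> wt \<mu> vs" if "vs \<in> seqs m V x" for vs
    using that by (intro wt_nonneg[OF nn]) (auto simp: seqs_def)
  have mueq: "mu_sub \<mu> (ledges vs) = wt \<mu> vs" if "vs \<in> seqs m V x" for vs
    using that by (intro mu_sub_ledges) (auto simp: seqs_def)
  have "sum (mu_sub \<mu>) ?A \<le> sum (mu_sub \<mu>) (ledges ` seqs m V x)"
    by (rule sum_mono2) (use finseq path_sub wnn mueq in auto)
  also have "\<dots> \<le> sum (mu_sub \<mu> \<circ> ledges) (seqs m V x)"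
    by (rule sum_image_le[OF finseq]) (use wnn mueq in auto)
  also have "\<dots> = sum (wt \<mu>) (seqs m V x)"
    by (rule sum.cong) (use mueq in auto)
  also have "\<dots> \<le> (\<Sum>u\<in>V-{x}. \<mu> {x,u} * sum (wt \<mu>) (seqs k (V-{x}) u))"
    unfolding m by (rule seqs_step[OF assms(1) nn assms(2)])
  also have "\<dots> \<le> (\<Sum>u\<in>V-{x}. \<mu> {x,u} * (tot (V-{x}) \<mu> / real k) ^ k)"
  proof (rule sum_mono, rule mult_left_mono)
    fix u assume u: "u \<in> V-{x}"
    have nn': "\<forall>e\<in>K_edges (V-{x}). 0 \<le> \<mu> e" using nn by (auto simp: K_edges_def)
    show "sum (wt \<mu>) (seqs k (V-{x}) u) \<le> (tot (V-{x}) \<mu> / real k) ^ k"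
      using seqs_bound[of "V-{x}" u \<mu> k] assms(1) nn' u by auto
    show "0 \<le> \<mu> {x,u}" using nn u K_edge_pair[of x V u] assms(2) by auto
  qed
  also have "\<dots> = mu_bar V \<mu> x * (tot (V-{x}) \<mu> / real k) ^ k"
    by (simp add: sum_distrib_right mu_bar_def)
  also have "tot (V-{x}) \<mu> = 1 - mu_bar V \<mu> x"
    using tot_split[OF assms(1,2), of \<mu>] tot1 unfolding mu_bar_def by simp
  also have "real k = real m - 1" using m by simp
  also have "k = m - 1" using m by simp
  finally show ?thesis .
qed

end
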